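(* Let $q=5$, $m\geq 2$ and $n=\frac{q^m-1}{2}$. Then the negacyclic BCH code $\mathcal{C}_{(q,n,4,0)}$, whose generator polynomial is $\mathbb{M}_{\beta}(x)\mathbb{M}_{\beta^3}(x)$, has parameters $[n,n-2m,4]$ and is distance-optimal with respect to the sphere-packing bound.
   Context: Let $\ell$ be the order of $q$ modulo $2n$, $\alpha$ a primitive element of $\mathrm{GF}(q^\ell)$, $\beta=\alpha^{(q^\ell-1)/(2n)}$ (a primitive $2n$-th root of unity), and $\mathbb{M}_{\beta^j}(x)$ the minimal polynomial of $\beta^j$ over $\mathrm{GF}(q)$. $\mathcal{C}_{(q,n,4,0)}$ is the negacyclic code of length $n$ over $\mathrm{GF}(q)$, i.e. the ideal of $\mathrm{GF}(q)[x]/(x^n+1)$ generated by $\mathrm{lcm}(\mathbb{M}_{\beta}(x),\mathbb{M}_{\beta^3}(x),\mathbb{M}_{\beta^5}(x))$. An $[n,k,d]$ code over $\mathrm{GF}(q)$ is distance-optimal with respect to the sphere-packing bound if the sphere-packing bound shows that no $[n,k,d+1]$ linear code over $\mathrm{GF}(q)$ exists. *)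

theory Defs
  imports "HOL-Computational_Algebra.Polynomial" "HOL-Computational_Algebra.Polynomial_Factorial" "HOL-Computational_Algebra.Euclidean_Algorithm"
begin

definition field_embedding :: "('f::field \<Rightarrow> 'e::field) \<Rightarrow> bool" where
  "field_embedding emb \<longleftrightarrow> emb 0 = 0 \<and> emb 1 = 1 \<and>
     (\<forall>a b. emb (a + b) = emb a + emb b) \<and> (\<forall>a b. emb (a * b) = emb a * emb b)"

definition primitive_root_of_unity :: "nat \<Rightarrow> 'e::field \<Rightarrow> bool" where
  "primitive_root_of_unity N b \<longleftrightarrow> 0 < N \<and> b ^ N = 1 \<and> (\<forall>j. 0 < j \<and> j < N \<longrightarrow> b ^ j \<noteq> 1)"

definition minimal_poly :: "('f::field \<Rightarrow> 'e::field) \<Rightarrow> 'e \<Rightarrow> 'f poly" where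
  "minimal_poly emb \<gamma> = (THE p. lead_coeff p = 1 \<and> poly (map_poly emb p) \<gamma> = 0 \<and>
      (\<forall>r. r \<noteq> 0 \<and> poly (map_poly emb r) \<gamma> = 0 \<longrightarrow> degree p \<le> degree r))"

(* the negacyclic code of length n generated by g: the ideal (g) of F[x]/(x^n+1),
   elements represented by their reduced polynomials of degree < n *)
definition negacyclic_code :: "nat \<Rightarrow> 'f::field poly \<Rightarrow> 'f poly set" where
  "negacyclic_code n g = {(a * g) mod (monom 1 n + 1) | a. True}"

definition C_q_n_4_0 :: "('f::field_gcd \<Rightarrow> 'e::field) \<Rightarrow> 'e \<Rightarrow> nat \<Rightarrow> 'f poly set" where
  "C_q_n_4_0 emb \<beta> n = negacyclic_code n
     (lcm (lcm (minimal_poly emb \<beta>) (minimal_poly emb (\<beta> ^ 3))) (minimal_poly emb (\<beta> ^ 5)))"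

(* Hamming weight / distance of words of length n represented as polynomials of degree < n *)
definition hamming_weight :: "'f::zero poly \<Rightarrow> nat" where
  "hamming_weight c = card {i. coeff c i \<noteq> 0}"

definition hamming_dist :: "'f::ab_group_add poly \<Rightarrow> 'f poly \<Rightarrow> nat" where
  "hamming_dist c c' = hamming_weight (c - c')"

definition minimum_distance :: "'f::ab_group_add poly set \<Rightarrow> nat" where
  "minimum_distance C = Min {hamming_dist c c' | c c'. c \<in> C \<and> c' \<in> C \<and> c \<noteq> c'}"

definition linear_code_params :: "'f::field poly set \<Rightarrow> nat \<Rightarrow> nat \<Rightarrow> nat \<Rightarrow> bool" where
  "linear_code_params C n k d \<longleftrightarrow>
     C \<subseteq> {c. degree c < n} \<and> module.subspace smult C \<and>
     vector_space.dim smult C = k \<and> minimum_distance C = d"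

definition sphere_packing_bound_holds :: "nat \<Rightarrow> nat \<Rightarrow> nat \<Rightarrow> nat \<Rightarrow> bool" where
  "sphere_packing_bound_holds q n k d \<longleftrightarrow>
     q ^ k * (\<Sum>i\<le>(d - 1) div 2. (n choose i) * (q - 1) ^ i) \<le> q ^ n"

definition sphere_packing_distance_optimal :: "nat \<Rightarrow> nat \<Rightarrow> nat \<Rightarrow> nat \<Rightarrow> bool" where
  "sphere_packing_distance_optimal q n k d \<longleftrightarrow> \<not> sphere_packing_bound_holds q n k (d + 1)"

end

theory Submission
  imports Defs "HOL-Library.FuncSet"
begin

lemma fe_props:
  assumes "field_embedding f"
  shows "f 0 = 0" "f 1 = 1" "f (a + b) = f a + f b" "f (a * b) = f a * f b"
  using assms unfolding field_embedding_def by auto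

lemma fe_neg: assumes "field_embedding f" shows "f (- a) = - f a"
proof -
  have "f (- a) + f a = 0" using fe_props[OF assms] by (metis add.left_inverse)
  then show ?thesis by (simp add: eq_neg_iff_add_eq_0)
qed

lemma fe_diff: assumes "field_embedding f" shows "f (a - b) = f a - f b"
  using fe_props[OF assms] fe_neg[OF assms] by (metis diff_conv_add_uminus)

lemma fe_power: assumes "field_embedding f" shows "f (a ^ k) = f a ^ k"
  by (induction k) (simp_all add: fe_props[OF assms])

lemma fe_sum: assumes "field_embedding f" shows "f (sum g A) = (\<Sum>x\<in>A. f (g x))"
  by (induction A rule: infinite_finite_induct) (simp_all add: fe_props[OF assms])

lemma fe_of_nat: assumes "field_embedding f" shows "f (of_nat k) = of_nat k"
  by (induction k) (simp_all add: fe_props[OF assms])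

lemma fe_zero_iff: assumes "field_embedding f" shows "f a = 0 \<longleftrightarrow> a = 0"
proof
  assume h: "f a = 0"
  show "a = 0"
  proof (rule ccontr)
    assume "a \<noteq> 0"
    then have "f (a * inverse a) = 1" using fe_props[OF assms] by simp
    then show False using h fe_props[OF assms] by simp
  qed
qed (simp add: fe_props[OF assms])

lemma fe_inj: assumes "field_embedding f" shows "inj f"
  by (rule injI) (metis fe_diff[OF assms] fe_zero_iff[OF assms] right_minus_eq)

lemma map_poly_add_fe: assumes "field_embedding f"
  shows "map_poly f (p + q) = map_poly f p + map_poly f q"
  by (intro poly_eqI) (simp add: coeff_map_poly fe_props[OF assms])

lemma map_poly_mult_fe: assumes "field_embedding f"
  shows "map_poly f (p * q) = map_poly f p * map_poly f q"
proof (induction p)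
  case 0 then show ?case by simp
next
  case (pCons a p)
  have "map_poly f (pCons a p * q) = map_poly f (smult a q + pCons 0 (p * q))" by simp
  also have "\<dots> = smult (f a) (map_poly f q) + pCons 0 (map_poly f p * map_poly f q)"
    by (simp add: map_poly_add_fe[OF assms] map_poly_smult fe_props[OF assms] map_poly_pCons pCons.IH)
  also have "\<dots> = map_poly f (pCons a p) * map_poly f q"
    by (simp add: map_poly_pCons fe_props[OF assms])
  finally show ?case .
qed

lemma map_poly_prod_fe: assumes "field_embedding f"
  shows "map_poly f (prod g A) = (\<Prod>x\<in>A. map_poly f (g x))"
  by (induction A rule: infinite_finite_induct)
     (simp_all add: map_poly_mult_fe[OF assms] fe_props[OF assms])

lemma poly_map_fe: assumes "field_embedding f"
  shows "f (poly p x) = poly (map_poly f p) (f x)"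
  by (induction p) (simp_all add: map_poly_pCons fe_props[OF assms])

lemma fe_comp: assumes "field_embedding f" "field_embedding g" shows "field_embedding (g \<circ> f)"
  using assms unfolding field_embedding_def by auto

lemma card_char:
  fixes a :: "'f::{field,finite}"
  shows "of_nat (card (UNIV :: 'f set)) = (0::'f)"
proof -
  have "(\<Sum>x\<in>UNIV. x + 1) = (\<Sum>x\<in>(UNIV::'f set). x)"
    by (rule sum.reindex_bij_witness[of _ "\<lambda>x. x - 1" "\<lambda>x. x + 1"]) auto
  then show ?thesis by (simp add: sum.distrib)
qed

lemma fermat_ff:
  fixes a :: "'f::{field,finite}"
  shows "a ^ card (UNIV :: 'f set) = a"
proof (cases "a = 0")
  case True
  have "card (UNIV :: 'f set) > 0" by (simp add: card_gt_0_iff)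
  then show ?thesis using True by simp
next
  case False
  define N where "N = UNIV - {0::'f}"
  have "(\<Prod>x\<in>N. a * x) = (\<Prod>x\<in>N. x)" unfolding N_def
  proof (rule prod.reindex_bij_witness[of _ "\<lambda>x. x / a" "\<lambda>x. a * x"])
    fix x assume "x \<in> UNIV - {0::'f}" then show "x / a \<in> UNIV - {0}" using False by simp
  next
    fix x assume "x \<in> UNIV - {0::'f}" then show "a * x \<in> UNIV - {0}" using False by simp
  next
    fix x assume "x \<in> UNIV - {0::'f}" then show "a * (x / a) = x" using False by simp
  next
    fix x assume "x \<in> UNIV - {0::'f}" then show "a * x / a = x" using False by simp
  qed simp
  moreover have "(\<Prod>x\<in>N. a * x) = a ^ card N * (\<Prod>x\<in>N. x)"
    by (simp add: prod.distrib)
  moreover have "(\<Prod>x\<in>N. x) \<noteq> 0" unfolding N_def by simp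
  ultimately have h1: "a ^ card N = 1" by simp
  have h2: "card (UNIV :: 'f set) = Suc (card N)"
  proof -
    have "card N = card (UNIV :: 'f set) - 1" unfolding N_def by (simp add: card_Diff_singleton)
    moreover have "card (UNIV :: 'f set) > 0" by (simp add: card_gt_0_iff)
    ultimately show ?thesis by simp
  qed
  have "a ^ card (UNIV :: 'f set) = a * a ^ card N" by (subst h2) simp
  then show ?thesis using h1 by simp
qed

lemma normalize_monic_poly:
  fixes p :: "'a::field_gcd poly"
  assumes "lead_coeff p = 1" shows "normalize p = p"
  using assms by (simp add: normalize_poly_eq_map_poly)

locale nbch =
  fixes emb :: "'f::{field_gcd,finite} \<Rightarrow> 'e::field" and \<beta> :: 'e and m n :: nat
  assumes card5: "card (UNIV :: 'f set) = 5"
    and m2: "m \<ge> 2"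
    and n_def: "n = (5 ^ m - 1) div 2"
    and fe: "field_embedding emb"
    and prim: "primitive_root_of_unity (2 * n) \<beta>"
begin

lemma five_f: "(5::'f) = 0"
  using card_char[where 'f='f] card5 by simp

lemma fermat5: "(a::'f) ^ 5 = a"
  using fermat_ff[of a] card5 by simp

lemma five_e: "(5::'e) = 0"
proof -
  have "emb (of_nat 5) = of_nat 5" by (rule fe_of_nat[OF fe])
  then show ?thesis using five_f fe_props[OF fe] by simp
qed

lemma frob_add: "((a::'e) + b) ^ 5 = a ^ 5 + b ^ 5"
proof -
  have "(a + b) ^ 5 = a ^ 5 + b ^ 5 + 5 * (a^4*b + 2*a^3*b^2 + 2*a^2*b^3 + a*b^4)"
    by (simp add: algebra_simps power2_eq_square power3_eq_cube power4_eq_xxxx numeral_eq_Suc)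
  then show ?thesis using five_e by simp
qed

lemma frob_fe: "field_embedding (\<lambda>x::'e. x ^ 5)"
  unfolding field_embedding_def by (simp add: frob_add power_mult_distrib)

lemma emb_frob: "emb a ^ 5 = emb a"
  using fe_power[OF fe, of a 5] fermat5 by simp

lemma poly_frob: "poly (map_poly emb p) (x ^ 5) = (poly (map_poly emb p) x) ^ 5"
proof -
  have "(poly (map_poly emb p) x) ^ 5 = poly (map_poly (\<lambda>x. x ^ 5) (map_poly emb p)) (x ^ 5)"
    using poly_map_fe[OF frob_fe] by blast
  also have "map_poly (\<lambda>x. x ^ 5) (map_poly emb p) = map_poly ((\<lambda>x. x ^ 5) \<circ> emb) p"
    by (rule map_poly_map_poly) (simp_all add: fe_props[OF fe])
  also have "\<dots> = map_poly emb p"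
    by (rule map_poly_cong) (simp add: emb_frob fe_props[OF fe])
  finally show ?thesis by simp
qed

lemma poly_frob_iter: "poly (map_poly emb p) (x ^ (5 ^ j)) = (poly (map_poly emb p) x) ^ (5 ^ j)"
proof (induction j)
  case 0 then show ?case by simp
next
  case (Suc j)
  have "x ^ (5 ^ Suc j) = (x ^ (5 ^ j)) ^ 5" by (simp add: power_mult[symmetric] mult.commute)
  then have "poly (map_poly emb p) (x ^ (5 ^ Suc j)) = (poly (map_poly emb p) x ^ (5 ^ j)) ^ 5"
    using poly_frob Suc by simp
  then show ?case by (simp add: power_mult[symmetric] mult.commute)
qed

lemma root_frob: "poly (map_poly emb p) x = 0 \<Longrightarrow> poly (map_poly emb p) (x ^ (5 ^ j)) = 0"
  using poly_frob_iter by simp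

lemma two_n: "2 * n = 5 ^ m - 1"
proof -
  have "odd ((5::nat) ^ m)" by simp
  then have "even ((5::nat) ^ m - 1)" by (metis One_nat_def dvd_minus_add even_Suc odd_pos Suc_pred' numeral_One odd_one plus_1_eq_Suc) 
  then show ?thesis unfolding n_def by simp
qed

lemma five_m: "5 ^ m = 2 * n + 1"
  using two_n by (metis Suc_eq_plus1 Suc_pred' zero_less_numeral zero_less_power)

lemma n_ge: "n \<ge> 12"
proof -
  have "(5::nat) ^ m \<ge> 5 ^ 2" using m2 by (intro power_increasing) auto
  then show ?thesis using five_m by simp
qed

lemma beta_pow: "\<beta> ^ (2 * n) = 1"
  using prim unfolding primitive_root_of_unity_def by simp

lemma beta_nz: "\<beta> \<noteq> 0"
proof
  assume "\<beta> = 0"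
  then have "\<beta> ^ (2 * n) = 0" using n_ge by simp
  then show False using beta_pow by simp
qed

lemma beta_inj: "inj_on (\<lambda>e. \<beta> ^ e) {..<2 * n}"
proof (rule inj_onI)
  have key: "\<beta> ^ i \<noteq> \<beta> ^ j" if "i < j" "j < 2 * n" for i j
  proof
    assume h: "\<beta> ^ i = \<beta> ^ j"
    have "\<beta> ^ j = \<beta> ^ i * \<beta> ^ (j - i)" using that by (simp add: power_add[symmetric])
    then have "\<beta> ^ (j - i) = 1" using h beta_nz by simp
    moreover have "0 < j - i" "j - i < 2 * n" using that by auto
    ultimately show False using prim unfolding primitive_root_of_unity_def by blast
  qed
  fix i j assume "i \<in> {..<2 * n}" "j \<in> {..<2 * n}" "\<beta> ^ i = \<beta> ^ j"
  then show "i = j" using key by (metis lessThan_iff nat_neq_iff)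
qed

lemma beta_n: "\<beta> ^ n = -1"
proof -
  have "(\<beta> ^ n) ^ 2 = 1" using beta_pow by (simp add: power_mult[symmetric] mult.commute)
  then have "\<beta> ^ n = 1 \<or> \<beta> ^ n = -1" using power2_eq_1_iff by blast
  moreover have "\<beta> ^ n \<noteq> 1" using prim n_ge unfolding primitive_root_of_unity_def by auto
  ultimately show ?thesis by blast
qed

lemma beta_5m: "\<beta> ^ (5 ^ m) = \<beta>"
  using five_m beta_pow by simp

end

context nbch begin

definition E1 :: "nat set" where "E1 = (\<lambda>j. 5 ^ j) ` {..<m}"
definition E3 :: "nat set" where "E3 = (\<lambda>j. 3 * 5 ^ j) ` {..<m}"

lemma pow_lt: "j < m \<Longrightarrow> 3 * 5 ^ j < 2 * n"
proof -
  assume "j < m"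
  then have "(5::nat) ^ j \<le> 5 ^ (m - 1)" by (intro power_increasing) auto
  moreover have "(5::nat) ^ m = 5 * 5 ^ (m - 1)" using m2 by (metis Suc_diff_1 le_trans one_le_numeral not_one_le_zero power_Suc neq0_conv le_numeral_extra(1) less_le_trans zero_less_numeral)
  moreover have "(5::nat) ^ (m - 1) \<ge> 1" by simp
  ultimately show ?thesis using two_n by linarith
qed

lemma E1_sub: "E1 \<subseteq> {..<2 * n}"
  unfolding E1_def using pow_lt by fastforce

lemma E3_sub: "E3 \<subseteq> {..<2 * n}"
  unfolding E3_def using pow_lt by fastforce

lemma E1_card: "card E1 = m"
  unfolding E1_def by (subst card_image) (auto intro: inj_onI simp: power_inject_exp)

lemma E3_card: "card E3 = m"
  unfolding E3_def by (subst card_image) (auto intro: inj_onI simp: power_inject_exp)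

lemma E13_disj: "E1 \<inter> E3 = {}"
proof -
  have "(5::nat) ^ i \<noteq> 3 * 5 ^ j" for i j
  proof
    assume "(5::nat) ^ i = 3 * 5 ^ j"
    then have "(3::nat) dvd 5 ^ i" by simp
    moreover have "prime (3::nat)" by simp
    ultimately have "(3::nat) dvd 5" using prime_dvd_power by blast
    then show False by simp
  qed
  then show ?thesis unfolding E1_def E3_def by auto
qed

lemma root_count:
  fixes p :: "'f poly"
  assumes "p \<noteq> 0" "E \<subseteq> {..<2 * n}" "\<And>e. e \<in> E \<Longrightarrow> poly (map_poly emb p) (\<beta> ^ e) = 0"
  shows "card E \<le> degree p"
proof -
  have mz: "map_poly emb p \<noteq> 0" using assms(1) by (simp add: map_poly_eq_0_iff fe_zero_iff[OF fe])
  have "card E = card ((\<lambda>e. \<beta> ^ e) ` E)"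
    using beta_inj assms(2) by (metis card_image inj_on_subset)
  also have "\<dots> \<le> card {x. poly (map_poly emb p) x = 0}"
    by (rule card_mono) (use poly_roots_finite[OF mz] assms(3) in auto)
  also have "\<dots> \<le> degree (map_poly emb p)" by (rule card_poly_roots_bound[OF mz])
  also have "\<dots> = degree p" by (simp add: degree_map_poly fe_zero_iff[OF fe])
  finally show ?thesis .
qed

lemma roots_E1: "poly (map_poly emb p) \<beta> = 0 \<Longrightarrow> e \<in> E1 \<Longrightarrow> poly (map_poly emb p) (\<beta> ^ e) = 0"
  unfolding E1_def using root_frob by auto

lemma roots_E3: "poly (map_poly emb p) (\<beta> ^ 3) = 0 \<Longrightarrow> e \<in> E3 \<Longrightarrow> poly (map_poly emb p) (\<beta> ^ e) = 0"
  unfolding E3_def using root_frob[of p "\<beta> ^ 3"] by (auto simp: power_mult)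

definition mp_pred :: "'e \<Rightarrow> 'f poly \<Rightarrow> bool" where
  "mp_pred \<gamma> p \<longleftrightarrow> lead_coeff p = 1 \<and> poly (map_poly emb p) \<gamma> = 0 \<and>
      (\<forall>r. r \<noteq> 0 \<and> poly (map_poly emb r) \<gamma> = 0 \<longrightarrow> degree p \<le> degree r)"

lemma map_poly_diff_emb: "map_poly emb (p - q) = map_poly emb p - map_poly emb q"
  by (intro poly_eqI) (simp add: coeff_map_poly fe_props[OF fe] fe_diff[OF fe])

lemma mp_unique:
  assumes "mp_pred \<gamma> p" "mp_pred \<gamma> q" shows "p = q"
proof (rule ccontr)
  assume ne: "p \<noteq> q"
  have p0: "p \<noteq> 0" "q \<noteq> 0" using assms unfolding mp_pred_def by auto
  have dq: "degree p = degree q" using assms p0 unfolding mp_pred_def by (meson antisym)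
  let ?r = "p - q"
  have r0: "?r \<noteq> 0" using ne by simp
  have rroot: "poly (map_poly emb ?r) \<gamma> = 0"
    using assms unfolding mp_pred_def by (simp add: map_poly_diff_emb)
  have "coeff ?r (degree p) = 0" using assms dq unfolding mp_pred_def by simp
  moreover have "degree ?r \<le> degree p" using dq by (simp add: degree_diff_le)
  ultimately have "degree ?r < degree p" using r0
    by (metis le_neq_implies_less leading_coeff_0_iff)
  moreover have "degree p \<le> degree ?r" using assms(1) r0 rroot unfolding mp_pred_def by blast
  ultimately show False by simp
qed

lemma mp_exists:
  assumes "r \<noteq> 0" "poly (map_poly emb r) \<gamma> = 0" shows "\<exists>p. mp_pred \<gamma> p"
proof -
  let ?P = "\<lambda>d. \<exists>r. r \<noteq> 0 \<and> poly (map_poly emb r) \<gamma> = 0 \<and> degree r = d"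
  have ex: "?P (degree r)" using assms by blast
  obtain r0 where r0: "r0 \<noteq> 0" "poly (map_poly emb r0) \<gamma> = 0" "degree r0 = (LEAST d. ?P d)"
    using LeastI_ex[of ?P] ex by blast
  have minr: "degree r0 \<le> degree s" if "s \<noteq> 0" "poly (map_poly emb s) \<gamma> = 0" for s
  proof -
    have "?P (degree s)" using that by blast
    then have "(LEAST d. ?P d) \<le> degree s" by (rule Least_le)
    then show ?thesis using r0(3) by simp
  qed
  define p where "p = smult (inverse (lead_coeff r0)) r0"
  have lc: "lead_coeff r0 \<noteq> 0" using r0(1) by (simp del: r0(3))
  have "lead_coeff p = 1" unfolding p_def using lc by simp
  moreover have "poly (map_poly emb p) \<gamma> = 0"
    unfolding p_def by (simp add: map_poly_smult fe_props[OF fe] r0(2))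
  moreover have "degree p = degree r0" unfolding p_def using lc by simp
  ultimately have "mp_pred \<gamma> p" unfolding mp_pred_def using minr by auto
  then show ?thesis by blast
qed

lemma mp_eqI: "mp_pred \<gamma> p \<Longrightarrow> minimal_poly emb \<gamma> = p"
  unfolding minimal_poly_def using mp_unique unfolding mp_pred_def
  by (intro the_equality) (auto simp: mp_pred_def)

lemma mp_spec:
  assumes "r \<noteq> 0" "poly (map_poly emb r) \<gamma> = 0" shows "mp_pred \<gamma> (minimal_poly emb \<gamma>)"
  using mp_exists[OF assms] mp_eqI by metis

lemma mp_nz: "mp_pred \<gamma> p \<Longrightarrow> p \<noteq> 0"
  unfolding mp_pred_def by auto

lemma mp_dvd:
  assumes "mp_pred \<gamma> M" "poly (map_poly emb r) \<gamma> = 0" shows "M dvd r"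
proof -
  have M0: "M \<noteq> 0" using mp_nz[OF assms(1)] .
  have "r = (r div M) * M + r mod M" by simp
  then have "map_poly emb r = map_poly emb (r div M) * map_poly emb M + map_poly emb (r mod M)"
    by (metis map_poly_add_fe[OF fe] map_poly_mult_fe[OF fe])
  then have "poly (map_poly emb (r mod M)) \<gamma> = 0"
    using assms unfolding mp_pred_def by (metis add_0 mult_zero_right poly_add poly_mult)
  moreover have "r mod M \<noteq> 0 \<Longrightarrow> degree (r mod M) < degree M" using degree_mod_less'[OF M0] by blast
  ultimately have "r mod M = 0" using assms(1) unfolding mp_pred_def by (meson leD)
  then show ?thesis by (simp add: mod_eq_0_iff_dvd)
qed

lemma mp_factor_root:
  assumes "mp_pred \<gamma> M" "d dvd M" "\<not> is_unit d" shows "poly (map_poly emb d) \<gamma> = 0"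
proof (rule ccontr)
  assume nr: "poly (map_poly emb d) \<gamma> \<noteq> 0"
  obtain e where Me: "M = d * e" using assms(2) by blast
  have M0: "M \<noteq> 0" using mp_nz[OF assms(1)] .
  then have d0: "d \<noteq> 0" and e0: "e \<noteq> 0" using Me by auto
  have "poly (map_poly emb M) \<gamma> = poly (map_poly emb d) \<gamma> * poly (map_poly emb e) \<gamma>"
    using Me by (simp add: map_poly_mult_fe[OF fe])
  then have "poly (map_poly emb e) \<gamma> = 0" using assms(1) nr unfolding mp_pred_def by simp
  then have "degree M \<le> degree e" using assms(1) e0 unfolding mp_pred_def by blast
  moreover have "degree M = degree d + degree e" using Me d0 e0 by (simp add: degree_mult_eq)
  ultimately have "degree d = 0" by simp
  then have "is_unit d" using d0 by (simp add: is_unit_iff_degree)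
  then show False using assms(3) by simp
qed

end

context nbch begin

lemma range_emb: assumes "(c::'e) ^ 5 = c" shows "c \<in> range emb"
proof -
  define q :: "'e poly" where "q = monom 1 5 - [:0, 1:]"
  have q0: "q \<noteq> 0"
  proof
    assume "q = 0"
    then have "coeff q 5 = 0" by simp
    moreover have "coeff [:0,1::'e:] 5 = 0" by (simp add: coeff_eq_0)
    ultimately show False unfolding q_def by (simp add: coeff_monom)
  qed
  have dq: "degree q \<le> 5" unfolding q_def
    by (intro degree_diff_le) (auto simp: degree_monom_le)
  have S: "{x. poly q x = 0} = {x. x ^ 5 = x}" unfolding q_def by (auto simp: poly_monom)
  have cardS: "card {x::'e. x ^ 5 = x} \<le> 5" using card_poly_roots_bound[OF q0] dq S by simp
  have finS: "finite {x::'e. x ^ 5 = x}" using poly_roots_finite[OF q0] S by simp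
  have sub: "range emb \<subseteq> {x. x ^ 5 = x}" using emb_frob by auto
  have cr: "card (range emb) = 5" using card_image[OF fe_inj[OF fe]] card5 by simp
  have "range emb = {x. x ^ 5 = x}"
    using card_seteq[OF finS sub] cr cardS by simp
  then show ?thesis using assms by simp
qed

lemma prod_shift:
  fixes h :: "nat \<Rightarrow> 'a::comm_monoid_mult"
  assumes "0 < k" "h k = h 0"
  shows "(\<Prod>j<k. h (Suc j)) = (\<Prod>j<k. h j)"
proof -
  obtain k' where k: "k = Suc k'" using assms(1) by (metis Suc_pred)
  have "(\<Prod>j<k. h (Suc j)) = (\<Prod>j<k'. h (Suc j)) * h k" using k by simp
  also have "\<dots> = h 0 * (\<Prod>j<k'. h (Suc j))" using assms(2) by (simp add: mult.commute)
  also have "\<dots> = (\<Prod>j<k. h j)" by (simp only: k prod.lessThan_Suc_shift)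
  finally show ?thesis .
qed

lemma frob_poly_exists:
  assumes g5: "\<gamma> ^ (5 ^ m) = \<gamma>"
  shows "\<exists>G. lead_coeff G = 1 \<and> degree G = m \<and> poly (map_poly emb G) \<gamma> = 0"
proof -
  define h where "h j = [:- (\<gamma> ^ (5 ^ j)), 1:]" for j
  define F where "F = (\<Prod>j<m. h j)"
  have m0: "0 < m" using m2 by simp
  have hm: "h m = h 0" unfolding h_def using g5 by simp
  have mh: "map_poly (\<lambda>x. x ^ 5) (h j) = h (Suc j)" for j
    unfolding h_def by (simp add: map_poly_pCons power_mult[symmetric] mult.commute)
  have "map_poly (\<lambda>x. x ^ 5) F = (\<Prod>j<m. h (Suc j))"
    unfolding F_def by (simp add: map_poly_prod_fe[OF frob_fe] mh)
  also have "\<dots> = F" unfolding F_def by (rule prod_shift[OF m0 hm])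
  finally have fF: "map_poly (\<lambda>x. x ^ 5) F = F" .
  have cF: "coeff F i \<in> range emb" for i
  proof -
    have "coeff F i ^ 5 = coeff F i" using arg_cong[OF fF, of "\<lambda>p. coeff p i"]
      by (simp add: coeff_map_poly)
    then show ?thesis by (rule range_emb)
  qed
  define G where "G = map_poly (inv emb) F"
  have inv0: "inv emb 0 = 0" using fe_inj[OF fe] fe_props[OF fe] by (metis inv_f_f)
  have mG: "map_poly emb G = F"
  proof -
    have "map_poly emb G = map_poly (emb \<circ> inv emb) F"
      unfolding G_def by (rule map_poly_map_poly) (simp_all add: inv0 fe_props[OF fe])
    also have "\<dots> = F"
    proof (rule map_poly_idI)
      fix x assume "x \<in> set (coeffs F)"
      then obtain i where "x = coeff F i" by (auto simp: coeffs_def split: if_splits)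
      then show "(emb \<circ> inv emb) x = x" using cF[of i] by (simp add: f_inv_into_f)
    qed
    finally show ?thesis .
  qed
  have hnz: "h j \<noteq> 0" for j unfolding h_def by simp
  have dF: "degree F = m" unfolding F_def using hnz
    by (subst degree_prod_sum_eq) (auto simp: h_def)
  have lF: "lead_coeff F = 1" unfolding F_def by (simp add: lead_coeff_prod h_def)
  have dG: "degree G = m" using dF mG degree_map_poly[of emb G] fe_zero_iff[OF fe] by metis
  have "emb (lead_coeff G) = 1"
    using arg_cong[OF mG, of "\<lambda>p. coeff p m"] dG dF lF by (simp add: coeff_map_poly fe_props[OF fe])
  then have lG: "lead_coeff G = 1" using fe_inj[OF fe] fe_props[OF fe] by (metis injD)
  have "poly F \<gamma> = 0" unfolding F_def poly_prod using m0
    by (intro prod_zero bexI[of _ 0]) (auto simp: h_def)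
  then show ?thesis using lG dG mG by auto
qed

end

context nbch begin

abbreviation "M1 \<equiv> minimal_poly emb \<beta>"
abbreviation "M3 \<equiv> minimal_poly emb (\<beta> ^ 3)"

lemma b3_5m: "(\<beta> ^ 3) ^ (5 ^ m) = \<beta> ^ 3"
  by (metis beta_5m power_mult mult.commute)

lemma mp_deg_ex:
  assumes "\<gamma> ^ (5 ^ m) = \<gamma>"
  shows "mp_pred \<gamma> (minimal_poly emb \<gamma>) \<and> degree (minimal_poly emb \<gamma>) \<le> m"
proof -
  obtain G where G: "lead_coeff G = 1" "degree G = m" "poly (map_poly emb G) \<gamma> = 0"
    using frob_poly_exists[OF assms] by blast
  have G0: "G \<noteq> 0" using G(1) by auto
  have sp: "mp_pred \<gamma> (minimal_poly emb \<gamma>)" by (rule mp_spec[OF G0 G(3)])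
  then show ?thesis using G G0 unfolding mp_pred_def by auto
qed

lemma mp1: "mp_pred \<beta> M1" using mp_deg_ex[OF beta_5m] by simp
lemma mp3: "mp_pred (\<beta> ^ 3) M3" using mp_deg_ex[OF b3_5m] by simp

lemma deg1: "degree M1 = m"
proof -
  have "card E1 \<le> degree M1"
    by (rule root_count[OF mp_nz[OF mp1] E1_sub]) (use mp1 roots_E1 in \<open>auto simp: mp_pred_def\<close>)
  then show ?thesis using mp_deg_ex[OF beta_5m] E1_card by simp
qed

lemma deg3: "degree M3 = m"
proof -
  have "card E3 \<le> degree M3"
    by (rule root_count[OF mp_nz[OF mp3] E3_sub]) (use mp3 roots_E3 in \<open>auto simp: mp_pred_def\<close>)
  then show ?thesis using mp_deg_ex[OF b3_5m] E3_card by simp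
qed

lemma M5: "minimal_poly emb (\<beta> ^ 5) = M1"
proof (rule mp_eqI)
  show "mp_pred (\<beta> ^ 5) M1" unfolding mp_pred_def
  proof (intro conjI allI impI)
    show "lead_coeff M1 = 1" using mp1 unfolding mp_pred_def by simp
    show "poly (map_poly emb M1) (\<beta> ^ 5) = 0"
      using root_frob[of M1 \<beta> 1] mp1 unfolding mp_pred_def by simp
    fix r assume r: "r \<noteq> 0 \<and> poly (map_poly emb r) (\<beta> ^ 5) = 0"
    have "(\<beta> ^ 5) ^ (5 ^ (m - 1)) = \<beta> ^ (5 ^ m)"
    proof -
      have "5 * 5 ^ (m - 1) = (5::nat) ^ m" using m2 by (cases m) auto
      then show ?thesis by (metis power_mult)
    qed
    then have "poly (map_poly emb r) \<beta> = 0" using root_frob[of r "\<beta> ^ 5" "m - 1"] r beta_5m by simp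
    then show "degree M1 \<le> degree r" using mp1 r unfolding mp_pred_def by blast
  qed
qed

lemma common_root_deg:
  assumes "p \<noteq> 0" "poly (map_poly emb p) \<beta> = 0" "poly (map_poly emb p) (\<beta> ^ 3) = 0"
  shows "2 * m \<le> degree p"
proof -
  have "card (E1 \<union> E3) \<le> degree p"
    by (rule root_count[OF assms(1)]) (use E1_sub E3_sub roots_E1 roots_E3 assms in auto)
  moreover have "card (E1 \<union> E3) = 2 * m"
    using E1_card E3_card E13_disj by (subst card_Un_disjoint) (auto simp: E1_def E3_def)
  ultimately show ?thesis by simp
qed

lemma coprime13: "coprime M1 M3"
proof -
  let ?d = "gcd M1 M3"
  have "is_unit ?d"
  proof (rule ccontr)
    assume nu: "\<not> is_unit ?d"
    have r1: "poly (map_poly emb ?d) \<beta> = 0" by (rule mp_factor_root[OF mp1 _ nu]) simp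
    have r3: "poly (map_poly emb ?d) (\<beta> ^ 3) = 0" by (rule mp_factor_root[OF mp3 _ nu]) simp
    have d0: "?d \<noteq> 0" using mp_nz[OF mp1] by simp
    have "2 * m \<le> degree ?d" by (rule common_root_deg[OF d0 r1 r3])
    moreover have "degree ?d \<le> degree M1" by (rule dvd_imp_degree_le) (use mp_nz[OF mp1] in auto)
    ultimately show False using deg1 m2 by simp
  qed
  then show ?thesis using is_unit_gcd[of M1 M3] by blast
qed

lemma lc1: "lead_coeff M1 = 1" using mp1 unfolding mp_pred_def by simp
lemma lc3: "lead_coeff M3 = 1" using mp3 unfolding mp_pred_def by simp

lemma lcm_eq: "lcm (lcm M1 M3) (minimal_poly emb (\<beta> ^ 5)) = M1 * M3"
proof -
  have nm: "normalize (M1 * M3) = M1 * M3"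
    by (rule normalize_monic_poly) (simp add: lead_coeff_mult lc1 lc3)
  have l: "lcm M1 M3 = M1 * M3" using lcm_coprime[OF coprime13] nm by simp
  have "lcm (M1 * M3) M1 = normalize (M1 * M3)" by (rule lcm_proj1_if_dvd) simp
  then show ?thesis using l nm M5 by simp
qed

end

lemma vand3:
  fixes b1 b2 b3 y1 y2 y3 :: "'a::field"
  assumes "y1 \<noteq> y2" "y1 \<noteq> y3"
    "b1 + b2 + b3 = 0" "b1 * y1 + b2 * y2 + b3 * y3 = 0"
    "b1 * y1^2 + b2 * y2^2 + b3 * y3^2 = 0"
  shows "b1 = 0"
proof -
  have "b1 * ((y1 - y2) * (y1 - y3)) =
    (b1 * y1^2 + b2 * y2^2 + b3 * y3^2) - (y2 + y3) * (b1 * y1 + b2 * y2 + b3 * y3)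
     + y2 * y3 * (b1 + b2 + b3)"
    by (simp add: algebra_simps power2_eq_square)
  then have "b1 * ((y1 - y2) * (y1 - y3)) = 0" using assms by simp
  then show ?thesis using assms(1,2) by simp
qed

lemma vand_set:
  fixes b y :: "nat \<Rightarrow> 'a::field"
  assumes "finite S" "card S \<le> 3" "inj_on y S"
    "\<And>t. t \<le> 2 \<Longrightarrow> (\<Sum>i\<in>S. b i * y i ^ t) = 0"
    "i \<in> S"
  shows "b i = 0"
proof -
  have e0: "(\<Sum>i\<in>S. b i) = 0" using assms(4)[of 0] by simp
  have e1: "(\<Sum>i\<in>S. b i * y i) = 0" using assms(4)[of 1] by simp
  have e2: "(\<Sum>i\<in>S. b i * y i ^ 2) = 0" using assms(4)[of 2] by simp
  have "card S \<noteq> 0" using assms(1,5) by auto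
  then have "card S = 1 \<or> card S = 2 \<or> card S = 3" using assms(2) by linarith
  moreover
  { assume "card S = 1"
    then obtain x where "S = {x}" by (metis card_1_singletonE)
    then have ?thesis using e0 assms(5) by simp }
  moreover
  { assume "card S = 2"
    then obtain x z where S: "S = {x, z}" "x \<noteq> z" by (metis card_2_iff)
    then have yne: "y x \<noteq> y z" using assms(3) by (auto dest: inj_onD)
    have "b x + b z = 0" "b x * y x + b z * y z = 0" using e0 e1 S by auto
    then have "b x * (y x - y z) = 0" "b z * (y z - y x) = 0" by (auto simp: algebra_simps eq_neg_iff_add_eq_0[symmetric])
    then have ?thesis using yne S assms(5) by auto }
  moreover
  { assume "card S = 3"
    then obtain x1 x2 x3 where S: "S = {x1, x2, x3}" "x1 \<noteq> x2" "x2 \<noteq> x3" "x1 \<noteq> x3"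
      by (metis card_3_iff)
    then have yne: "y x1 \<noteq> y x2" "y x2 \<noteq> y x3" "y x1 \<noteq> y x3" using assms(3) by (auto dest: inj_onD)
    have a: "b x1 + b x2 + b x3 = 0" "b x1 * y x1 + b x2 * y x2 + b x3 * y x3 = 0"
      "b x1 * y x1^2 + b x2 * y x2^2 + b x3 * y x3^2 = 0" using e0 e1 e2 S by (auto simp: add.assoc)
    have "b x1 = 0" by (rule vand3[OF yne(1) yne(3) a])
    moreover have "b x2 = 0"
      by (rule vand3[of "y x2" "y x1" "y x3" "b x2" "b x1" "b x3"]) (use yne a in \<open>auto simp: algebra_simps\<close>)
    moreover have "b x3 = 0"
      by (rule vand3[of "y x3" "y x1" "y x2" "b x3" "b x1" "b x2"]) (use yne a in \<open>auto simp: algebra_simps\<close>)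
    ultimately have ?thesis using S assms(5) by auto }
  ultimately show ?thesis by blast
qed

context nbch begin

definition X :: "'f poly" where "X = monom 1 n + 1"
abbreviation "g \<equiv> M1 * M3"

lemma map_X: "map_poly emb X = monom 1 n + 1"
  unfolding X_def by (simp add: map_poly_add_fe[OF fe] map_poly_monom fe_props[OF fe])

lemma degX: "degree X = n"
  unfolding X_def using n_ge by (subst degree_add_eq_left) (auto simp: degree_monom_eq)

lemma X0: "X \<noteq> 0" using degX n_ge by auto

lemma g_dvd_X: "g dvd X"
proof -
  have "M1 dvd X"
    by (rule mp_dvd[OF mp1]) (simp add: map_X poly_monom beta_n)
  moreover have "M3 dvd X"
    by (rule mp_dvd[OF mp3]) (simp add: map_X poly_monom power_mult[symmetric] mult.commute[of 3] power_mult beta_n)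
  ultimately show ?thesis using divides_mult coprime13 by blast
qed

lemma g0: "g \<noteq> 0" using mp_nz[OF mp1] mp_nz[OF mp3] by simp
lemma degg: "degree g = 2 * m" using deg1 deg3 mp_nz[OF mp1] mp_nz[OF mp3] by (simp add: degree_mult_eq)
lemma lcg: "lead_coeff g = 1" by (simp add: lead_coeff_mult lc1 lc3)

lemma code_char: "C_q_n_4_0 emb \<beta> n = {c. degree c < n \<and> g dvd c}"
proof -
  have "C_q_n_4_0 emb \<beta> n = negacyclic_code n g" unfolding C_q_n_4_0_def using lcm_eq by simp
  also have "\<dots> = {c. degree c < n \<and> g dvd c}"
  proof (intro set_eqI iffI)
    fix c assume "c \<in> negacyclic_code n g"
    then obtain a where c: "c = (a * g) mod X" unfolding negacyclic_code_def X_def by blast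
    have "degree c < n"
    proof (cases "c = 0")
      case True then show ?thesis using n_ge by simp
    next
      case False then show ?thesis using c degree_mod_less'[OF X0] degX by simp
    qed
    moreover have "g dvd c" unfolding c by (rule dvd_mod) (use g_dvd_X in auto)
    ultimately show "c \<in> {c. degree c < n \<and> g dvd c}" by simp
  next
    fix c assume "c \<in> {c. degree c < n \<and> g dvd c}"
    then obtain h where c: "c = g * h" "degree c < n" by blast
    have "(h * g) mod X = c" using c by (simp add: mult.commute mod_poly_less degX)
    then show "c \<in> negacyclic_code n g" unfolding negacyclic_code_def X_def by blast
  qed
  finally show ?thesis .
qed

lemma g_roots:
  assumes "g dvd c" "k \<in> {1, 3, 5}"
  shows "poly (map_poly emb c) (\<beta> ^ k) = 0"
proof -
  obtain h where c: "c = M1 * M3 * h" using assms(1) by blast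
  have r1: "poly (map_poly emb M1) \<beta> = 0" using mp1 unfolding mp_pred_def by simp
  have r5: "poly (map_poly emb M1) (\<beta> ^ 5) = 0" using root_frob[OF r1, of 1] by simp
  have r3: "poly (map_poly emb M3) (\<beta> ^ 3) = 0" using mp3 unfolding mp_pred_def by simp
  show ?thesis using assms(2) r1 r3 r5 unfolding c by (auto simp: map_poly_mult_fe[OF fe])
qed

lemma poly_support:
  "poly (map_poly emb c) x = (\<Sum>i\<in>{i. coeff c i \<noteq> 0}. emb (coeff c i) * x ^ i)"
proof -
  have "poly (map_poly emb c) x = (\<Sum>i\<le>degree c. emb (coeff c i) * x ^ i)"
    by (simp add: poly_altdef degree_map_poly fe_zero_iff[OF fe] coeff_map_poly fe_props[OF fe])
  also have "\<dots> = (\<Sum>i\<in>{i. coeff c i \<noteq> 0}. emb (coeff c i) * x ^ i)"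
    by (rule sum.mono_neutral_right) (auto simp: fe_props[OF fe] le_degree)
  finally show ?thesis .
qed

lemma weight_ge4:
  assumes "c \<noteq> 0" "degree c < n" "g dvd c"
  shows "4 \<le> hamming_weight c"
proof (rule ccontr)
  let ?S = "{i. coeff c i \<noteq> 0}"
  assume "\<not> 4 \<le> hamming_weight c"
  then have cS: "card ?S \<le> 3" unfolding hamming_weight_def by simp
  have Ssub: "?S \<subseteq> {..<n}"
  proof
    fix i assume "i \<in> ?S"
    then have "i \<le> degree c" by (simp add: le_degree)
    then show "i \<in> {..<n}" using assms(2) by simp
  qed
  have fS: "finite ?S" using Ssub finite_subset by blast
  obtain i0 where i0: "coeff c i0 \<noteq> 0" using assms(1) by (metis leading_coeff_0_iff)
  define b where "b i = emb (coeff c i) * \<beta> ^ i" for i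
  define y where "y i = \<beta> ^ (2 * i)" for i
  have inj: "inj_on y ?S"
  proof (rule inj_onI)
    fix i j assume "i \<in> ?S" "j \<in> ?S" "y i = y j"
    moreover have "2 * i \<in> {..<2 * n}" "2 * j \<in> {..<2 * n}" using Ssub \<open>i \<in> ?S\<close> \<open>j \<in> ?S\<close> by auto
    ultimately have "2 * i = 2 * j" using inj_onD[OF beta_inj] unfolding y_def by blast
    then show "i = j" by simp
  qed
  have eqs: "(\<Sum>i\<in>?S. b i * y i ^ t) = 0" if "t \<le> 2" for t
  proof -
    have k: "2 * t + 1 \<in> {1, 3, 5}" using that by auto
    have "(\<Sum>i\<in>?S. b i * y i ^ t) = poly (map_poly emb c) (\<beta> ^ (2 * t + 1))"
      unfolding poly_support b_def y_def
      by (rule sum.cong) (auto simp: power_mult[symmetric] power_add[symmetric] algebra_simps)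
    then show ?thesis using g_roots[OF assms(3) k] by simp
  qed
  have "b i0 = 0" by (rule vand_set[OF fS cS inj eqs]) (use i0 in auto)
  then show False using i0 beta_nz unfolding b_def by (simp add: fe_zero_iff[OF fe])
qed

end

interpretation pvs: vector_space "smult :: 'a::field \<Rightarrow> 'a poly \<Rightarrow> 'a poly"
  by unfold_locales (simp_all add: smult_add_right smult_add_left)

lemma sum_monoms_less:
  fixes p :: "'a::comm_ring_1 poly"
  assumes "p = 0 \<or> degree p < K"
  shows "(\<Sum>i<K. monom (coeff p i) i) = p"
  by (rule poly_eqI) (use assms in \<open>auto simp: coeff_sum coeff_monom coeff_eq_0 not_less\<close>)

context nbch begin

abbreviation "Cd \<equiv> {c. degree c < n \<and> g dvd c}"
abbreviation "K \<equiv> n - 2 * m"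

lemma subspace_C: "module.subspace smult Cd"
  unfolding pvs.subspace_def
proof (intro conjI ballI allI)
  show "0 \<in> Cd" using n_ge by simp
  fix x y assume x: "x \<in> Cd" and y: "y \<in> Cd"
  then show "x + y \<in> Cd"
    using degree_add_le_max[of x y] by (auto simp: dvd_add)
next
  fix c x assume x: "x \<in> Cd"
  then show "smult c x \<in> Cd"
    using degree_smult_le[of c x] by (auto intro: dvd_smult)
qed

lemma sm: "smult a (g * monom 1 i) = g * monom a i"
  by (simp add: mult_smult_right[symmetric] smult_monom)

definition Bas :: "'f poly set" where "Bas = (\<lambda>i. g * monom 1 i) ` {..<K}"

lemma inj_bas: "inj_on (\<lambda>i. g * monom 1 i) {..<K}"
proof (rule inj_onI)
  fix i j assume "g * monom 1 i = g * monom (1::'f) j"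
  then have "monom (1::'f) i = monom 1 j" using g0 by simp
  then show "i = j" by (metis degree_monom_eq one_neq_zero)
qed

lemma card_bas: "card Bas = K" unfolding Bas_def using card_image[OF inj_bas] by simp

lemma bas_sub: "Bas \<subseteq> Cd"
proof
  fix v assume "v \<in> Bas"
  then obtain i where i: "i < K" "v = g * monom 1 i" unfolding Bas_def by auto
  have "degree v = 2 * m + i" using i g0 degg by (simp add: degree_mult_eq degree_monom_eq)
  then show "v \<in> Cd" using i by auto
qed

lemma C_span: "Cd \<subseteq> pvs.span Bas"
proof
  fix c assume c: "c \<in> Cd"
  then obtain h where h: "c = g * h" by blast
  have "h = 0 \<or> degree h < K"
  proof (cases "h = 0")
    case False
    then have "degree c = 2 * m + degree h" using h g0 degg by (simp add: degree_mult_eq)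
    then show ?thesis using c by auto
  qed simp
  then have hs: "(\<Sum>i<K. monom (coeff h i) i) = h" by (rule sum_monoms_less)
  have "(\<Sum>i<K. smult (coeff h i) (g * monom 1 i)) = g * (\<Sum>i<K. monom (coeff h i) i)"
    unfolding sm by (rule sum_distrib_left[symmetric])
  then have "c = (\<Sum>i<K. smult (coeff h i) (g * monom 1 i))"
    unfolding hs h by simp
  also have "\<dots> \<in> pvs.span Bas"
    by (intro pvs.span_sum pvs.span_scale pvs.span_base) (auto simp: Bas_def)
  finally show "c \<in> pvs.span Bas" .
qed

lemma bas_indep: "pvs.independent Bas"
proof -
  have fin: "finite Bas" unfolding Bas_def by simp
  have "\<not> (\<exists>u. (\<exists>v\<in>Bas. u v \<noteq> 0) \<and> (\<Sum>v\<in>Bas. smult (u v) v) = 0)"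
  proof
    assume "\<exists>u. (\<exists>v\<in>Bas. u v \<noteq> 0) \<and> (\<Sum>v\<in>Bas. smult (u v) v) = 0"
    then obtain u v where v: "v \<in> Bas" "u v \<noteq> 0" and s: "(\<Sum>v\<in>Bas. smult (u v) v) = 0" by blast
    define w where "w i = u (g * monom 1 i)" for i
    have "(\<Sum>v\<in>Bas. smult (u v) v) = (\<Sum>i<K. smult (w i) (g * monom 1 i))"
      unfolding Bas_def w_def by (subst sum.reindex[OF inj_bas]) simp
    also have "\<dots> = g * (\<Sum>i<K. monom (w i) i)"
      unfolding sm by (simp add: sum_distrib_left)
    finally have "(\<Sum>i<K. monom (w i) i) = 0" using s g0 by simp
    moreover obtain i where i: "i < K" "v = g * monom 1 i" using v unfolding Bas_def by auto
    ultimately have "coeff (\<Sum>i<K. monom (w i) i) i = 0" by simp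
    then have "w i = 0" using i by (simp add: coeff_sum coeff_monom)
    then show False using v i unfolding w_def by simp
  qed
  then show ?thesis using pvs.dependent_finite[OF fin] by blast
qed

lemma dim_C: "vector_space.dim smult Cd = K"
  by (rule pvs.dim_unique[OF bas_sub C_span bas_indep card_bas])

end

lemma Poly_coeff_take:
  fixes r :: "'a::zero poly"
  assumes "degree r < k"
  shows "Poly (map (coeff r) [0..<k]) = r"
  by (rule poly_eqI) (use assms in \<open>auto simp: nth_default_def coeff_eq_0 not_less\<close>)

lemma card_low_deg:
  "finite {r :: 'a::{zero,finite} poly. degree r < k} \<and> card {r :: 'a::{zero,finite} poly. degree r < k} \<le> card (UNIV :: 'a set) ^ k"
proof -
  let ?A = "{0..<k} \<rightarrow>\<^sub>E (UNIV :: 'a set)"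
  let ?f = "\<lambda>f. Poly (map f [0..<k])"
  have sub: "{r :: 'a poly. degree r < k} \<subseteq> ?f ` ?A"
  proof
    fix r :: "'a poly" assume "r \<in> {r. degree r < k}"
    then have d: "degree r < k" by simp
    have "?f (restrict (coeff r) {0..<k}) = Poly (map (coeff r) [0..<k])"
      by (intro arg_cong[where f=Poly] map_cong) auto
    then have "?f (restrict (coeff r) {0..<k}) = r" using Poly_coeff_take[OF d] by simp
    moreover have "restrict (coeff r) {0..<k} \<in> ?A" by simp
    ultimately show "r \<in> ?f ` ?A" by (metis image_eqI)
  qed
  have fA: "finite ?A" by (simp add: finite_PiE)
  have cA: "card ?A = card (UNIV :: 'a set) ^ k" by (simp add: card_PiE)
  have "card {r :: 'a poly. degree r < k} \<le> card (?f ` ?A)"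
    by (rule card_mono[OF finite_imageI[OF fA] sub])
  also have "\<dots> \<le> card ?A" by (rule card_image_le[OF fA])
  finally show ?thesis using cA finite_subset[OF sub finite_imageI[OF fA]] by simp
qed

lemma gauss2: "2 * (\<Sum>j<N. j) = N * (N - (1::nat))"
proof (induction N)
  case 0 then show ?case by simp
next
  case (Suc N)
  have "2 * (\<Sum>j<Suc N. j) = 2 * (\<Sum>j<N. j) + 2 * N" by simp
  also have "\<dots> = N * (N - 1) + 2 * N" using Suc by simp
  also have "\<dots> = Suc N * N" by (cases N) (simp_all add: algebra_simps)
  finally show ?case by simp
qed

lemma min_dist_gen:
  fixes C :: "'a::ab_group_add poly set"
  assumes "\<forall>c\<in>C. \<forall>c'\<in>C. c \<noteq> c' \<longrightarrow> 4 \<le> hamming_dist c c' \<and> hamming_dist c c' \<le> N"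
    "\<exists>c\<in>C. \<exists>c'\<in>C. c \<noteq> c' \<and> hamming_dist c c' = 4"
  shows "minimum_distance C = 4"
proof -
  let ?D = "{hamming_dist c c' | c c'. c \<in> C \<and> c' \<in> C \<and> c \<noteq> c'}"
  have sub: "?D \<subseteq> {..N}" using assms(1) by auto
  have fin: "finite ?D" using finite_subset[OF sub] by simp
  have lb: "\<forall>d\<in>?D. 4 \<le> d" using assms(1) by auto
  have "4 \<in> ?D" using assms(2) by force
  then show ?thesis unfolding minimum_distance_def using fin lb by (intro Min_eqI) auto
qed

context nbch begin

lemma weight_le_n: "degree c < n \<Longrightarrow> hamming_weight c \<le> n"
proof -
  assume d: "degree c < n"
  have "{i. coeff c i \<noteq> 0} \<subseteq> {..<n}"
  proof
    fix i assume "i \<in> {i. coeff c i \<noteq> 0}"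
    then have "i \<le> degree c" by (simp add: le_degree)
    then show "i \<in> {..<n}" using d by simp
  qed
  then show ?thesis unfolding hamming_weight_def using card_mono[of "{..<n}"] by fastforce
qed

lemma exists_w4: "\<exists>c. c \<noteq> 0 \<and> degree c < n \<and> g dvd c \<and> hamming_weight c \<le> 4"
proof -
  define NZ where "NZ = (UNIV :: 'f set) - {0}"
  define I where "I = (SIGMA j:{..<n}. {..<j})"
  define P where "P = I \<times> (NZ \<times> NZ)"
  define \<phi> where "\<phi> = (\<lambda>((j::nat, i::nat), (a::'f, b::'f)). monom a i + monom b j)"
  have cNZ: "card NZ = 4" unfolding NZ_def using card5 by (simp add: card_Diff_singleton)
  have cI: "2 * card I = n * (n - 1)" unfolding I_def using gauss2[of n] by (simp add: card_SigmaI)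
  have fP: "finite P" unfolding P_def I_def NZ_def by simp
  have cP: "card P = card I * 16" unfolding P_def using cNZ by (simp add: card_cartesian_product)
  have dphi: "degree (\<phi> x) = fst (fst x)" "coeff (\<phi> x) (fst (fst x)) = snd (snd x)"
    "\<phi> x - monom (snd (snd x)) (fst (fst x)) = monom (fst (snd x)) (snd (fst x))"
    if "x \<in> P" for x
  proof -
    obtain j i a b where x: "x = ((j, i), (a, b))" by (metis prod.collapse)
    have h: "i < j" "a \<noteq> 0" "b \<noteq> 0" using that unfolding x P_def I_def NZ_def by auto
    show "degree (\<phi> x) = fst (fst x)" unfolding x \<phi>_def using h
      by (simp add: degree_add_eq_right degree_monom_eq)
    show "coeff (\<phi> x) (fst (fst x)) = snd (snd x)" unfolding x \<phi>_def using h by (simp add: coeff_monom)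
    show "\<phi> x - monom (snd (snd x)) (fst (fst x)) = monom (fst (snd x)) (snd (fst x))"
      unfolding x \<phi>_def by simp
  qed
  have injphi: "inj_on \<phi> P"
  proof (rule inj_onI)
    fix x y assume xy: "x \<in> P" "y \<in> P" "\<phi> x = \<phi> y"
    obtain j i a b where x: "x = ((j, i), (a, b))" by (metis prod.collapse)
    obtain j' i' a' b' where y: "y = ((j', i'), (a', b'))" by (metis prod.collapse)
    have a0: "a \<noteq> 0" "a' \<noteq> 0" using xy unfolding x y P_def NZ_def by auto
    have jj: "j = j'" using dphi(1)[OF xy(1)] dphi(1)[OF xy(2)] xy(3) x y by simp
    have bb: "b = b'" using dphi(2)[OF xy(1)] dphi(2)[OF xy(2)] xy(3) x y jj by simp
    have "monom a i = monom a' i'" using dphi(3)[OF xy(1)] dphi(3)[OF xy(2)] xy(3) x y jj bb by simp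
    then have "i = i'" "a = a'" using a0 by (metis degree_monom_eq, metis coeff_monom)
    then show "x = y" using x y jj bb by simp
  qed
  define W where "W = \<phi> ` P"
  have fW: "finite W" unfolding W_def using fP by simp
  have cW: "card W = card I * 16" unfolding W_def using card_image[OF injphi] cP by simp
  let ?R = "{r :: 'f poly. degree r < 2 * m}"
  have R: "finite ?R" "card ?R \<le> 5 ^ (2 * m)" using card_low_deg[where 'a='f, of "2 * m"] card5 by auto
  have img: "(\<lambda>w. w mod g) ` W \<subseteq> ?R"
  proof
    fix r assume "r \<in> (\<lambda>w. w mod g) ` W"
    then obtain w where r: "r = w mod g" by blast
    show "r \<in> ?R"
    proof (cases "r = 0")
      case True then show ?thesis using degg m2 by simp
    next
      case False then show ?thesis using r degree_mod_less'[OF g0] degg by simp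
    qed
  qed
  have big: "5 ^ (2 * m) < card W"
  proof -
    have "(5::nat) ^ (2 * m) = (2 * n + 1) ^ 2" using five_m by (simp add: power_mult mult.commute[of 2 m])
    also have "\<dots> = 4 * (n * n) + 4 * n + 1" by (simp add: power2_eq_square algebra_simps)
    also have "\<dots> < 8 * (n * n) - 8 * n"
    proof -
      have "n * n \<ge> 12 * n" using n_ge by simp
      then show ?thesis using n_ge by linarith
    qed
    also have "8 * (n * n) - 8 * n = 8 * (n * (n - 1))" by (simp add: algebra_simps diff_mult_distrib2)
    also have "\<dots> = card W" using cW cI by simp
    finally show ?thesis .
  qed
  have "\<not> inj_on (\<lambda>w. w mod g) W"
  proof
    assume "inj_on (\<lambda>w. w mod g) W"
    then have "card W \<le> card ?R" using card_inj_on_le[OF _ img R(1)] by blast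
    then show False using big R(2) by simp
  qed
  then obtain w1 w2 where w: "w1 \<in> W" "w2 \<in> W" "w1 \<noteq> w2" "w1 mod g = w2 mod g"
    unfolding inj_on_def by blast
  obtain x1 where x1: "x1 \<in> P" "w1 = \<phi> x1" using w(1) unfolding W_def by blast
  obtain x2 where x2: "x2 \<in> P" "w2 = \<phi> x2" using w(2) unfolding W_def by blast
  obtain j1 i1 a1 b1 where e1: "x1 = ((j1, i1), (a1, b1))" by (metis prod.collapse)
  obtain j2 i2 a2 b2 where e2: "x2 = ((j2, i2), (a2, b2))" by (metis prod.collapse)
  have lt: "i1 < j1" "j1 < n" "i2 < j2" "j2 < n" using x1 x2 e1 e2 unfolding P_def I_def by auto
  define c where "c = w1 - w2"
  have "c \<noteq> 0" using w(3) unfolding c_def by simp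
  moreover have "g dvd c"
  proof -
    have "c mod g = (w1 mod g - w2 mod g) mod g" unfolding c_def by (rule mod_diff_eq[symmetric])
    then have "c mod g = 0" using w(4) by simp
    then show ?thesis by (simp add: mod_eq_0_iff_dvd)
  qed
  moreover have "degree c < n"
  proof -
    have "degree w1 < n" "degree w2 < n"
      using dphi(1)[OF x1(1)] dphi(1)[OF x2(1)] x1 x2 e1 e2 lt by auto
    then show ?thesis unfolding c_def using degree_diff_le_max[of w1 w2] by simp
  qed
  moreover have "hamming_weight c \<le> 4"
  proof -
    have "{i. coeff c i \<noteq> 0} \<subseteq> {i1, j1, i2, j2}"
      unfolding c_def x1(2) x2(2) e1 e2 \<phi>_def by (auto simp: coeff_monom split: if_splits)
    moreover have "card {i1, j1, i2, j2} \<le> 4" by (simp add: card_insert_le_m1 card_insert_if)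
    ultimately show ?thesis unfolding hamming_weight_def using card_mono[of "{i1, j1, i2, j2}"]
      by (meson finite.emptyI finite.insertI le_trans)
  qed
  ultimately show ?thesis by blast
qed

lemma min_dist: "minimum_distance Cd = 4"
proof (rule min_dist_gen)
  show "\<forall>c\<in>Cd. \<forall>c'\<in>Cd. c \<noteq> c' \<longrightarrow> 4 \<le> hamming_dist c c' \<and> hamming_dist c c' \<le> n"
  proof (intro ballI impI)
    fix c c' assume cc: "c \<in> Cd" "c' \<in> Cd" "c \<noteq> c'"
    have "max (degree c) (degree c') < n" using cc by simp
    then have d: "degree (c - c') < n" using degree_diff_le_max[of c c'] by linarith
    moreover have "g dvd (c - c')" using cc by (simp add: dvd_diff)
    ultimately show "4 \<le> hamming_dist c c' \<and> hamming_dist c c' \<le> n"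
      using weight_ge4[of "c - c'"] weight_le_n[OF d] cc unfolding hamming_dist_def by simp
  qed
  obtain c where c: "c \<noteq> 0" "degree c < n" "g dvd c" "hamming_weight c \<le> 4" using exists_w4 by blast
  have "hamming_weight c = 4" using weight_ge4[OF c(1-3)] c(4) by simp
  then have "hamming_dist c 0 = 4" unfolding hamming_dist_def by simp
  moreover have "0 \<in> Cd" using n_ge by simp
  moreover have "c \<in> Cd" using c by simp
  ultimately show "\<exists>c\<in>Cd. \<exists>c'\<in>Cd. c \<noteq> c' \<and> hamming_dist c c' = 4" using c(1) by blast
qed

lemma pow5_ge: "(5::nat) ^ k \<ge> 4 * k + 1"
  by (induction k) auto

lemma sphere: "sphere_packing_distance_optimal 5 n (n - 2 * m) 4"
proof -
  have n2m: "2 * m \<le> n"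
  proof -
    have "2 * n + 1 \<ge> 4 * m + 1" using five_m pow5_ge[of m] by simp
    then show ?thesis by simp
  qed
  have sum: "(\<Sum>i\<le>2. (n choose i) * (5 - 1) ^ i) = 1 + 4 * n + 16 * (n choose 2)"
    by (simp add: numeral_2_eq_2)
  have c2: "2 * (n choose 2) = n * (n - 1)"
  proof -
    have "even (n * (n - 1))" by (cases "even n") auto
    then show ?thesis by (simp add: choose_two)
  qed
  have big: "(5::nat) ^ (2 * m) < 1 + 4 * n + 16 * (n choose 2)"
  proof -
    have "(5::nat) ^ (2 * m) = (2 * n + 1) ^ 2" using five_m by (simp add: power_mult mult.commute[of 2 m])
    also have "\<dots> = 4 * (n * n) + 4 * n + 1" by (simp add: power2_eq_square algebra_simps)
    also have "\<dots> < 1 + 4 * n + 8 * (n * (n - 1))"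
    proof -
      have "n * n \<ge> 12 * n" using n_ge by simp
      moreover have "n * (n - 1) = n * n - n" by (simp add: diff_mult_distrib2)
      ultimately show ?thesis using n_ge by linarith
    qed
    finally show ?thesis using c2 by linarith
  qed
  have "(5::nat) ^ n = 5 ^ (n - 2 * m) * 5 ^ (2 * m)"
    using n2m by (metis le_add_diff_inverse2 power_add)
  then have lt: "(5::nat) ^ n < 5 ^ (n - 2 * m) * (1 + 4 * n + 16 * (n choose 2))"
    using big by (metis mult_less_mono2 zero_less_numeral zero_less_power)
  have e: "(4 + 1 - 1) div 2 = (2::nat)" by simp
  show ?thesis unfolding sphere_packing_distance_optimal_def sphere_packing_bound_holds_def e sum
    using lt by (simp only: not_le)
qed

end

theorem theorem41:
  fixes emb :: "'f::{field_gcd,finite} \<Rightarrow> 'e::field"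
    and \<beta> :: 'e and m n :: nat
  assumes "card (UNIV :: 'f set) = 5"
    and "m \<ge> 2"
    and "n = (5 ^ m - 1) div 2"
    and "field_embedding emb"
    and "primitive_root_of_unity (2 * n) \<beta>"
  shows "lcm (lcm (minimal_poly emb \<beta>) (minimal_poly emb (\<beta> ^ 3))) (minimal_poly emb (\<beta> ^ 5))
           = minimal_poly emb \<beta> * minimal_poly emb (\<beta> ^ 3)
         \<and> linear_code_params (C_q_n_4_0 emb \<beta> n) n (n - 2 * m) 4
         \<and> sphere_packing_distance_optimal 5 n (n - 2 * m) 4"
proof -
  interpret nbch emb \<beta> m n using assms by unfold_locales
  have "C_q_n_4_0 emb \<beta> n \<subseteq> {c. degree c < n}" unfolding code_char by auto
  then show ?thesis
    unfolding linear_code_params_def using lcm_eq subspace_C dim_C min_dist sphere code_char by simp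
qed

end
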